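(* Let $1\le\beta<\sqrt{5/3}$, and let $\sigma,\sigma_0:[n]\to[K]$ be assignments all of whose community sizes lie in $[\frac{n}{\beta K},\frac{\beta n}{K}]$, with $d(\sigma,\sigma_0)=m$ for an integer $0<m<n$. Then $$\alpha(\sigma;\sigma_0)\wedge\gamma(\sigma;\sigma_0)\ge\begin{cases}\frac{nm}{K\beta}-m^2, & m\le\frac{n}{2K},\\ \frac{c_\beta nm}{K}, & m>\frac n{2K},\end{cases}\qquad c_\beta=\frac{(5-3\beta^2)^2}{2\beta(1+3(5-3\beta^2)^2)}.$$
   Context: $d(\sigma_1,\sigma_2)=\min_\delta d_H(\sigma_1,\delta\circ\sigma_2)$ over permutations $\delta$ of $[K]$, $d_H$ the Hamming distance. $\alpha(\sigma;\sigma_0)=|\{(i,j):i<j,\ \sigma_0(i)=\sigma_0(j),\ \sigma(i)\ne\sigma(j)\}|$ and $\gamma(\sigma;\sigma_0)=|\{(i,j):i<j,\ \sigma_0(i)\ne\sigma_0(j),\ \sigma(i)=\sigma(j)\}|$. *)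

theory Defs
  imports "HOL-Analysis.Analysis" "HOL-Combinatorics.Permutations"
begin

definition is_assignment :: "nat \<Rightarrow> nat \<Rightarrow> (nat \<Rightarrow> nat) \<Rightarrow> bool" where
  "is_assignment n K \<sigma> \<longleftrightarrow> (\<forall>i<n. \<sigma> i < K)"

definition hamming :: "nat \<Rightarrow> (nat \<Rightarrow> nat) \<Rightarrow> (nat \<Rightarrow> nat) \<Rightarrow> nat" where
  "hamming n \<sigma>1 \<sigma>2 = card {i. i < n \<and> \<sigma>1 i \<noteq> \<sigma>2 i}"

definition perm_dist :: "nat \<Rightarrow> nat \<Rightarrow> (nat \<Rightarrow> nat) \<Rightarrow> (nat \<Rightarrow> nat) \<Rightarrow> nat" where
  "perm_dist n K \<sigma>1 \<sigma>2 = Min {hamming n \<sigma>1 (\<delta> \<circ> \<sigma>2) | \<delta>. \<delta> permutes {0..<K}}"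

definition comm_size :: "nat \<Rightarrow> (nat \<Rightarrow> nat) \<Rightarrow> nat \<Rightarrow> nat" where
  "comm_size n \<sigma> k = card {i. i < n \<and> \<sigma> i = k}"

definition alpha_cnt :: "nat \<Rightarrow> (nat \<Rightarrow> nat) \<Rightarrow> (nat \<Rightarrow> nat) \<Rightarrow> nat" where
  "alpha_cnt n \<sigma> \<sigma>0 = card {(i, j). i < j \<and> j < n \<and> \<sigma>0 i = \<sigma>0 j \<and> \<sigma> i \<noteq> \<sigma> j}"

definition gamma_cnt :: "nat \<Rightarrow> (nat \<Rightarrow> nat) \<Rightarrow> (nat \<Rightarrow> nat) \<Rightarrow> nat" where
  "gamma_cnt n \<sigma> \<sigma>0 = card {(i, j). i < j \<and> j < n \<and> \<sigma>0 i \<noteq> \<sigma>0 j \<and> \<sigma> i = \<sigma> j}"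

definition c_beta :: "real \<Rightarrow> real" where
  "c_beta \<beta> = (5 - 3 * \<beta>\<^sup>2)\<^sup>2 / (2 * \<beta> * (1 + 3 * (5 - 3 * \<beta>\<^sup>2)\<^sup>2))"

end

theory Submission
  imports Defs
begin
lemma fin1: "finite {i. i<(n::nat) \<and> Q i}" by simp

lemma grp_card:
  assumes "\<forall>i<(n::nat). g i < (K::nat)"
  shows "(\<Sum>a<K. card {i. i<n \<and> g i = a \<and> P i}) = card {i. i<n \<and> P i}"
proof -
  have "card (\<Union>a\<in>{..<K}. {i. i<n \<and> g i = a \<and> P i}) = (\<Sum>a<K. card {i. i<n \<and> g i = a \<and> P i})"
    by (rule card_UN_disjoint) auto
  moreover have "(\<Union>a\<in>{..<K}. {i. i<n \<and> g i = a \<and> P i}) = {i. i<n \<and> P i}"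
    using assms by auto
  ultimately show ?thesis by simp
qed

lemma grp_sum:
  assumes "\<forall>i<(n::nat). g i < (K::nat)"
  shows "(\<Sum>i<n. \<phi> i) = (\<Sum>a<K. \<Sum>i\<in>{i. i<n \<and> g i = a}. (\<phi> i :: 'b::comm_monoid_add))"
proof -
  have "(\<Sum>a\<in>{..<K}. \<Sum>i\<in>{x. x \<in> {..<n} \<and> g x = a}. \<phi> i) = (\<Sum>i\<in>{..<n}. \<phi> i)"
    by (rule sum.group) (use assms in auto)
  then show ?thesis by simp
qed

lemma card_split:
  "card {i. i<n \<and> g i = a \<and> P i} + card {i. i<n \<and> g i = a \<and> \<not> P i} = card {i. i<(n::nat) \<and> g i = a}"
proof -
  have "{i. i<n \<and> g i = a} = {i. i<n \<and> g i = a \<and> P i} \<union> {i. i<n \<and> g i = a \<and> \<not> P i}" by auto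
  moreover have "card ({i. i<n \<and> g i = a \<and> P i} \<union> {i. i<n \<and> g i = a \<and> \<not> P i}) = 
     card {i. i<n \<and> g i = a \<and> P i} + card {i. i<n \<and> g i = a \<and> \<not> P i}"
    by (rule card_Un_disjoint) auto
  ultimately show ?thesis by simp
qed
lemma alpha_double:
  "2 * alpha_cnt n \<sigma> \<sigma>0 = (\<Sum>i<n. card {j. j<n \<and> \<sigma>0 j = \<sigma>0 i \<and> \<sigma> j \<noteq> \<sigma> i})"
proof -
  define S where "S = {(i, j). i < j \<and> j < n \<and> \<sigma>0 i = \<sigma>0 j \<and> \<sigma> i \<noteq> \<sigma> j}"
  define P where "P = Sigma {..<n} (\<lambda>i. {j. j<n \<and> \<sigma>0 j = \<sigma>0 i \<and> \<sigma> j \<noteq> \<sigma> i})"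
  have fS: "finite S" unfolding S_def
    by (rule finite_subset[of _ "{..<n} \<times> {..<n}"]) auto
  have sw: "prod.swap ` S = {(i, j). j < i \<and> i < n \<and> \<sigma>0 i = \<sigma>0 j \<and> \<sigma> i \<noteq> \<sigma> j}"
    unfolding S_def by (auto simp: image_def)
  have "P = S \<union> prod.swap ` S" unfolding sw
  proof (rule set_eqI)
    fix x :: "nat \<times> nat"
    obtain i j where x: "x = (i,j)" by fastforce
    show "x \<in> P \<longleftrightarrow> x \<in> S \<union> {(i, j). j < i \<and> i < n \<and> \<sigma>0 i = \<sigma>0 j \<and> \<sigma> i \<noteq> \<sigma> j}"
      unfolding x P_def S_def using less_linear[of i j] by auto
  qed
  moreover have "S \<inter> prod.swap ` S = {}" unfolding sw unfolding S_def by auto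
  moreover have "card (prod.swap ` S) = card S" by (simp add: card_image)
  ultimately have "card P = 2 * card S"
    using fS by (simp add: card_Un_disjoint)
  moreover have "card P = (\<Sum>i<n. card {j. j<n \<and> \<sigma>0 j = \<sigma>0 i \<and> \<sigma> j \<noteq> \<sigma> i})"
    unfolding P_def by (subst card_SigmaI) auto
  ultimately show ?thesis unfolding alpha_cnt_def S_def by simp
qed

lemma hamming_sum:
  assumes "\<forall>i<n. \<sigma>0 i < (K::nat)"
  shows "hamming n \<sigma> (\<delta> \<circ> \<sigma>0) = (\<Sum>a<K. card {i. i<n \<and> \<sigma>0 i = a \<and> \<sigma> i \<noteq> \<delta> a})"
proof -
  have "(\<Sum>a<K. card {i. i<n \<and> \<sigma>0 i = a \<and> \<sigma> i \<noteq> \<delta> (\<sigma>0 i)}) = card {i. i<n \<and> \<sigma> i \<noteq> \<delta> (\<sigma>0 i)}"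
    by (rule grp_card[OF assms])
  moreover have "\<And>a. {i. i<n \<and> \<sigma>0 i = a \<and> \<sigma> i \<noteq> \<delta> (\<sigma>0 i)} = {i. i<n \<and> \<sigma>0 i = a \<and> \<sigma> i \<noteq> \<delta> a}" by auto
  ultimately show ?thesis unfolding hamming_def by simp
qed

lemma hamming_inv:
  assumes "\<delta> permutes A"
  shows "hamming n \<sigma> (\<delta> \<circ> \<sigma>0) = hamming n \<sigma>0 (inv \<delta> \<circ> \<sigma>)"
proof -
  have "\<And>i. (\<sigma> i \<noteq> \<delta> (\<sigma>0 i)) = (\<sigma>0 i \<noteq> inv \<delta> (\<sigma> i))"
    using permutes_inverses[OF assms] by metis
  then show ?thesis unfolding hamming_def by simp
qed

lemma extend_perm:
  assumes "finite A" "S \<subseteq> A" "inj_on h S" "h ` S \<subseteq> A"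
  shows "\<exists>\<delta>. \<delta> permutes A \<and> (\<forall>a\<in>S. \<delta> a = h a)"
proof -
  have fS: "finite S" using assms(1,2) by (rule finite_subset[rotated])
  have "card (A - S) = card (A - h ` S)"
    using assms fS by (simp add: card_Diff_subset card_image)
  then obtain g where g: "bij_betw g (A - S) (A - h ` S)"
    using finite_same_card_bij assms(1) by (metis finite_Diff)
  have b1: "bij_betw h S (h ` S)" using assms(3) by (simp add: inj_on_imp_bij_betw)
  have "bij_betw (\<lambda>x. if x \<in> S then h x else g x) (S \<union> (A - S)) (h ` S \<union> (A - h ` S))"
    by (rule bij_betw_disjoint_Un[OF b1 g]) blast+
  moreover have "S \<union> (A - S) = A" using assms(2) by blast
  moreover have "h ` S \<union> (A - h ` S) = A" using assms(4) by blast
  ultimately have bb: "bij_betw (\<lambda>x. if x \<in> S then h x else g x) A A" by simp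
  define \<delta> where "\<delta> = (\<lambda>x. if x \<in> A then (if x \<in> S then h x else g x) else x)"
  have "bij_betw \<delta> A A"
  proof (rule bij_betw_cong[THEN iffD1, OF _ bb])
    show "\<And>a. a\<in>A \<Longrightarrow> (if a \<in> S then h a else g a) = \<delta> a" unfolding \<delta>_def by simp
  qed
  then have "\<delta> permutes A" by (rule bij_imp_permutes) (simp add: \<delta>_def)
  moreover have "\<forall>a\<in>S. \<delta> a = h a" using assms(2) unfolding \<delta>_def by auto
  ultimately show ?thesis by blast
qed

lemma key_arith:
  fixes \<beta> t :: real
  assumes "1 \<le> \<beta>" "\<beta> < sqrt (5/3)"
  assumes ht: "t = (5 - 3 * \<beta>\<^sup>2)\<^sup>2 / (1 + 3 * (5 - 3 * \<beta>\<^sup>2)\<^sup>2)"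
  shows "0 \<le> t" "t \<le> 1" "t * \<beta> \<le> (1 - t) * (2 / \<beta> - \<beta>)" "c_beta \<beta> = t / (2 * \<beta>)"
proof -
  define s where "s = 5 - 3 * \<beta>^2"
  have t_def: "t = s^2 / (1 + 3 * s^2)" unfolding ht s_def by simp
  have "\<beta>^2 < (sqrt (5/3))\<^sup>2"
    using assms(1,2) by (intro power_strict_mono) auto
  then have bb: "\<beta>^2 < 5/3" by simp
  have s0: "0 < s" unfolding s_def using bb by simp
  have D: "0 < 1 + 3 * s^2" by (simp add: add_pos_nonneg)
  show "0 \<le> t" unfolding t_def using D by simp
  show "t \<le> 1" unfolding t_def using D by (simp add: divide_le_eq_1)
  show "c_beta \<beta> = t / (2 * \<beta>)" unfolding t_def c_beta_def s_def by (simp add: field_simps)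
  have sq: "0 \<le> 3 * s * (s - 1/2)^2" using s0 by simp
  have poly: "(1 + 2 * s^2) * (1 + s) - s^2 * (5 - s) = 3 * s * (s - 1/2)^2 + s/4 + 1"
    by (simp add: power2_eq_square algebra_simps)
  have b3: "3 * \<beta>^2 = 5 - s" unfolding s_def by simp
  have "s^2 * (3 * \<beta>^2) \<le> (1 + 2 * s^2) * (6 - 3 * \<beta>^2)"
    unfolding b3 using poly sq s0 by (simp add: algebra_simps)
  then have ineq: "s^2 * \<beta>^2 \<le> (1 + 2 * s^2) * (2 - \<beta>^2)" by (simp add: algebra_simps)
  have bp: "0 < \<beta>" using assms(1) by simp
  have e1: "2/\<beta> - \<beta> = (2-\<beta>^2)/\<beta>" using bp by (simp add: field_simps power2_eq_square)
  have e2: "1 - t = (1 + 2 * s^2) / (1 + 3 * s^2)" unfolding t_def using D by (simp add: field_simps)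
  have "s^2 * \<beta> * \<beta> \<le> (1 + 2 * s^2) * (2 - \<beta>^2)" using ineq by (simp add: power2_eq_square mult.assoc)
  then have "s^2 * \<beta> \<le> ((1 + 2 * s^2) * (2 - \<beta>^2)) / \<beta>" using bp by (simp add: pos_le_divide_eq)
  then have k: "s^2 * \<beta> \<le> (1 + 2 * s^2) * ((2 - \<beta>^2) / \<beta>)" by simp
  have "t * \<beta> = (s^2 * \<beta>) / (1 + 3 * s^2)" unfolding t_def by simp
  also have "\<dots> \<le> ((1 + 2 * s^2) * ((2 - \<beta>^2) / \<beta>)) / (1 + 3 * s^2)"
    using k D by (intro divide_right_mono) auto
  also have "\<dots> = (1 - t) * (2 / \<beta> - \<beta>)" unfolding e1 e2 by simp
  finally show "t * \<beta> \<le> (1 - t) * (2 / \<beta> - \<beta>)" .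
qed

lemma bound1:
  fixes n K m :: nat and \<beta> :: real and \<sigma> \<sigma>0 \<delta> :: "nat \<Rightarrow> nat"
  assumes bp: "0 < \<beta>" and as0: "\<forall>i<n. \<sigma>0 i < K"
    and sz: "\<forall>k<K. real n / (\<beta> * real K) \<le> real (comm_size n \<sigma>0 k)"
    and hm: "hamming n \<sigma> (\<delta> \<circ> \<sigma>0) = m"
  shows "real n * real m / (real K * \<beta>) - (real m)\<^sup>2 \<le> real (alpha_cnt n \<sigma> \<sigma>0)"
proof -
  define R where "R = (\<lambda>a. card {i. i<n \<and> \<sigma>0 i = a})"
  define G where "G = (\<lambda>a. card {i. i<n \<and> \<sigma>0 i = a \<and> \<sigma> i = \<delta> a})"
  define E where "E = (\<lambda>a. card {i. i<n \<and> \<sigma>0 i = a \<and> \<sigma> i \<noteq> \<delta> a})"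
  define f where "f = (\<lambda>i. card {j. j<n \<and> \<sigma>0 j = \<sigma>0 i \<and> \<sigma> j \<noteq> \<sigma> i})"
  have GE: "\<And>a. G a + E a = R a" unfolding G_def E_def R_def by (rule card_split)
  have Esum: "(\<Sum>a<K. E a) = m" using hamming_sum[OF as0, of \<sigma> \<delta>] hm unfolding E_def by simp
  have fib: "2 * (G a * E a) \<le> (\<Sum>i\<in>{i. i<n \<and> \<sigma>0 i = a}. f i)" for a
  proof -
    let ?F = "{i. i<n \<and> \<sigma>0 i = a}"
    have pw: "(if \<sigma> i = \<delta> a then E a else G a) \<le> f i" if i: "i \<in> ?F" for i
    proof (cases "\<sigma> i = \<delta> a")
      case True
      then have "f i = E a" unfolding f_def E_def using i by simp
      then show ?thesis using True by simp
    next
      case False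
      have "G a \<le> f i" unfolding G_def f_def using i False by (intro card_mono) auto
      then show ?thesis using False by simp
    qed
    have c1: "card (?F \<inter> {i. \<sigma> i = \<delta> a}) = G a" unfolding G_def by (rule arg_cong[where f=card]) auto
    have c2: "card (?F \<inter> - {i. \<sigma> i = \<delta> a}) = E a" unfolding E_def by (rule arg_cong[where f=card]) auto
    have "(\<Sum>i\<in>?F. (if \<sigma> i = \<delta> a then E a else G a)) = G a * E a + E a * G a"
      by (simp add: sum.If_cases c1 c2)
    moreover have "(\<Sum>i\<in>?F. (if \<sigma> i = \<delta> a then E a else G a)) \<le> (\<Sum>i\<in>?F. f i)"
      by (rule sum_mono) (rule pw)
    ultimately show ?thesis by (simp add: mult.commute)
  qed
  have "2 * alpha_cnt n \<sigma> \<sigma>0 = (\<Sum>i<n. f i)" unfolding f_def by (rule alpha_double)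
  also have "\<dots> = (\<Sum>a<K. \<Sum>i\<in>{i. i<n \<and> \<sigma>0 i = a}. f i)" by (rule grp_sum[OF as0])
  finally have "(\<Sum>a<K. 2 * (G a * E a)) \<le> 2 * alpha_cnt n \<sigma> \<sigma>0"
    using sum_mono[of "{..<K}" "\<lambda>a. 2 * (G a * E a)" "\<lambda>a. \<Sum>i\<in>{i. i<n \<and> \<sigma>0 i = a}. f i"] fib by simp
  then have A1: "(\<Sum>a<K. G a * E a) \<le> alpha_cnt n \<sigma> \<sigma>0" by (simp add: sum_distrib_left[symmetric])
  have Em: "E a \<le> m" if "a < K" for a
  proof -
    have "E a \<le> (\<Sum>a<K. E a)" by (rule member_le_sum) (use that in auto)
    then show ?thesis using Esum by simp
  qed
  let ?q = "real n / (\<beta> * real K)"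
  have pt: "(?q - real m) * real (E a) \<le> real (G a * E a)" if a: "a < K" for a
  proof -
    have "?q \<le> real (R a)" using sz a unfolding R_def comm_size_def by auto
    then have "?q - real m \<le> real (G a)" using GE[of a] Em[OF a] by linarith
    then show ?thesis by (simp add: mult_right_mono)
  qed
  have "(?q - real m) * real m = (\<Sum>a<K. (?q - real m) * real (E a))"
    using Esum by (simp add: sum_distrib_left[symmetric] flip: of_nat_sum)
  also have "\<dots> \<le> (\<Sum>a<K. real (G a * E a))" by (rule sum_mono) (use pt in auto)
  also have "\<dots> = real (\<Sum>a<K. G a * E a)" by (simp only: of_nat_sum)
  also have "\<dots> \<le> real (alpha_cnt n \<sigma> \<sigma>0)" using A1 by (simp only: of_nat_le_iff)
  finally have "(?q - real m) * real m \<le> real (alpha_cnt n \<sigma> \<sigma>0)" .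
  moreover have "(?q - real m) * real m = real n * real m / (real K * \<beta>) - (real m)\<^sup>2"
    by (simp add: algebra_simps power2_eq_square)
  ultimately show ?thesis by simp
qed

lemma bound2:
  fixes n K m :: nat and \<beta> :: real and \<sigma> \<sigma>0 :: "nat \<Rightarrow> nat"
  assumes Kp: "0 < K" and b1: "1 \<le> \<beta>" and b2: "\<beta> < sqrt (5/3)"
    and as: "\<forall>i<n. \<sigma> i < K" and as0: "\<forall>i<n. \<sigma>0 i < K"
    and sz: "\<forall>k<K. real (comm_size n \<sigma> k) \<le> \<beta> * real n / real K"
    and sz0: "\<forall>k<K. real n / (\<beta> * real K) \<le> real (comm_size n \<sigma>0 k)"
    and H2: "\<forall>\<delta>. \<delta> permutes {0..<K} \<longrightarrow> m \<le> hamming n \<sigma> (\<delta> \<circ> \<sigma>0)"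
  shows "c_beta \<beta> * real n * real m / real K \<le> real (alpha_cnt n \<sigma> \<sigma>0)"
proof -
  define t where "t = (5 - 3 * \<beta>\<^sup>2)\<^sup>2 / (1 + 3 * (5 - 3 * \<beta>\<^sup>2)\<^sup>2)"
  have t0: "0 \<le> t" and t1: "t \<le> 1" and tk: "t * \<beta> \<le> (1 - t) * (2 / \<beta> - \<beta>)"
    and ct: "c_beta \<beta> = t / (2 * \<beta>)"
    using key_arith[OF b1 b2 t_def] by auto
  have bp: "0 < \<beta>" using b1 by simp
  define q where "q = real n / (\<beta> * real K)"
  have q0: "0 \<le> q" unfolding q_def using bp by simp
  define R where "R = (\<lambda>a. card {i. i<n \<and> \<sigma>0 i = a})"
  define N where "N = (\<lambda>a b. card {i. i<n \<and> \<sigma>0 i = a \<and> \<sigma> i = b})"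
  define f where "f = (\<lambda>i. card {j. j<n \<and> \<sigma>0 j = \<sigma>0 i \<and> \<sigma> j \<noteq> \<sigma> i})"
  have fN: "f i + N (\<sigma>0 i) (\<sigma> i) = R (\<sigma>0 i)" for i
  proof -
    have "card {j. j<n \<and> \<sigma>0 j = \<sigma>0 i \<and> \<sigma> j \<noteq> \<sigma> i} + card {j. j<n \<and> \<sigma>0 j = \<sigma>0 i \<and> \<not> \<sigma> j \<noteq> \<sigma> i} = R (\<sigma>0 i)"
      unfolding R_def by (rule card_split)
    then show ?thesis unfolding f_def N_def by simp
  qed
  have NR: "N a b \<le> R a" for a b unfolding N_def R_def by (intro card_mono) auto
  have Rq: "q \<le> real (R a)" if "a < K" for a using sz0 that unfolding q_def R_def comm_size_def by auto
  have "\<forall>a. \<exists>b. a < K \<longrightarrow> b < K \<and> (\<forall>b'<K. N a b' \<le> N a b)"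
  proof
    fix a
    show "\<exists>b. a < K \<longrightarrow> b < K \<and> (\<forall>b'<K. N a b' \<le> N a b)"
    proof (cases "a < K")
      case True
      then have ne: "N a ` {..<K} \<noteq> {}" by auto
      have "Max (N a ` {..<K}) \<in> N a ` {..<K}" using ne by (intro Max_in) auto
      then obtain b where b: "b < K" "N a b = Max (N a ` {..<K})" by auto
      have "\<forall>b'<K. N a b' \<le> N a b" unfolding b(2) by (auto intro: Max_ge)
      then show ?thesis using b by blast
    qed auto
  qed
  then obtain h where h: "\<And>a. a < K \<Longrightarrow> h a < K \<and> (\<forall>b'<K. N a b' \<le> N a (h a))"
    by metis
  define M where "M = (\<lambda>a. N a (h a))"
  have MR: "M a \<le> R a" for a unfolding M_def by (rule NR)
  have fM: "R (\<sigma>0 i) - M (\<sigma>0 i) \<le> f i" if i: "i < n" for i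
  proof -
    have "N (\<sigma>0 i) (\<sigma> i) \<le> M (\<sigma>0 i)" unfolding M_def using h[of "\<sigma>0 i"] as0 as i by auto
    then show ?thesis using fN[of i] by linarith
  qed
  define E' where "E' = (\<Sum>a<K. real (R a) - real (M a))"
  have "(\<Sum>a<K. R a * (R a - M a)) = (\<Sum>a<K. \<Sum>i\<in>{i. i<n \<and> \<sigma>0 i = a}. R (\<sigma>0 i) - M (\<sigma>0 i))"
  proof (rule sum.cong)
    fix a assume "a \<in> {..<K}"
    have "(\<Sum>i\<in>{i. i<n \<and> \<sigma>0 i = a}. R (\<sigma>0 i) - M (\<sigma>0 i)) = (\<Sum>i\<in>{i. i<n \<and> \<sigma>0 i = a}. R a - M a)"
      by (rule sum.cong) auto
    also have "\<dots> = card {i. i<n \<and> \<sigma>0 i = a} * (R a - M a)" using sum_constant[of "R a - M a" "{i. i<n \<and> \<sigma>0 i = a}"] by (simp only: of_nat_id)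
    also have "\<dots> = R a * (R a - M a)" unfolding R_def by (rule refl)
    finally show "R a * (R a - M a) = (\<Sum>i\<in>{i. i<n \<and> \<sigma>0 i = a}. R (\<sigma>0 i) - M (\<sigma>0 i))" by (rule sym)
  qed simp
  also have "\<dots> = (\<Sum>i<n. R (\<sigma>0 i) - M (\<sigma>0 i))" by (rule grp_sum[OF as0, symmetric])
  also have "\<dots> \<le> (\<Sum>i<n. f i)" by (rule sum_mono) (use fM in auto)
  also have "\<dots> = 2 * alpha_cnt n \<sigma> \<sigma>0" unfolding f_def by (rule alpha_double[symmetric])
  finally have A2: "(\<Sum>a<K. R a * (R a - M a)) \<le> 2 * alpha_cnt n \<sigma> \<sigma>0" .
  have "q * E' = (\<Sum>a<K. q * (real (R a) - real (M a)))" unfolding E'_def by (simp add: sum_distrib_left)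
  also have "\<dots> \<le> (\<Sum>a<K. real (R a) * (real (R a) - real (M a)))"
  proof (rule sum_mono)
    fix a assume "a \<in> {..<K}"
    then show "q * (real (R a) - real (M a)) \<le> real (R a) * (real (R a) - real (M a))"
      using Rq[of a] MR[of a] by (intro mult_right_mono) auto
  qed
  also have "\<dots> = real (\<Sum>a<K. R a * (R a - M a))"
    by (simp add: of_nat_sum of_nat_diff[OF MR])
  also have "\<dots> \<le> real (2 * alpha_cnt n \<sigma> \<sigma>0)" using A2 by (simp only: of_nat_le_iff)
  finally have qE: "q * E' \<le> 2 * real (alpha_cnt n \<sigma> \<sigma>0)" by simp
  define S where "S = {a. a < K \<and> (\<forall>a'<a. h a' \<noteq> h a)}"
  have injS: "inj_on h S"
  proof (rule inj_onI)
    fix x y assume "x \<in> S" "y \<in> S" "h x = h y"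
    then have hx: "\<forall>a'<x. h a' \<noteq> h x" and hy: "\<forall>a'<y. h a' \<noteq> h y" and e: "h x = h y"
      unfolding S_def by auto
    show "x = y"
    proof (rule ccontr)
      assume "x \<noteq> y"
      then consider "x < y" | "y < x" by arith
      then show False
      proof cases
        case 1
        then have "h x \<noteq> h y" using hy by blast
        then show False using e by simp
      next
        case 2
        then have "h y \<noteq> h x" using hx by blast
        then show False using e by simp
      qed
    qed
  qed
  have "\<exists>\<delta>. \<delta> permutes {0..<K} \<and> (\<forall>a\<in>S. \<delta> a = h a)"
    by (rule extend_perm[OF _ _ injS]) (auto simp: S_def h)
  then obtain \<delta> where \<delta>: "\<delta> permutes {0..<K}" "\<And>a. a \<in> S \<Longrightarrow> \<delta> a = h a" by blast
  define X where "X = (\<Sum>a<K. if a \<in> S then 0 else real (M a))"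
  have "m \<le> hamming n \<sigma> (\<delta> \<circ> \<sigma>0)" using H2 \<delta>(1) by blast
  also have "\<dots> = (\<Sum>a<K. card {i. i<n \<and> \<sigma>0 i = a \<and> \<sigma> i \<noteq> \<delta> a})" by (rule hamming_sum[OF as0])
  finally have "real m \<le> (\<Sum>a<K. real (card {i. i<n \<and> \<sigma>0 i = a \<and> \<sigma> i \<noteq> \<delta> a}))"
    by (simp only: of_nat_sum[symmetric] of_nat_le_iff)
  also have "\<dots> \<le> (\<Sum>a<K. (real (R a) - real (M a)) + (if a \<in> S then 0 else real (M a)))"
  proof (rule sum_mono)
    fix a assume a: "a \<in> {..<K}"
    have cs: "card {i. i<n \<and> \<sigma>0 i = a \<and> \<sigma> i \<noteq> \<delta> a} + N a (\<delta> a) = R a"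
    proof -
      have "card {i. i<n \<and> \<sigma>0 i = a \<and> \<sigma> i \<noteq> \<delta> a} + card {i. i<n \<and> \<sigma>0 i = a \<and> \<not> \<sigma> i \<noteq> \<delta> a} = R a"
        unfolding R_def by (rule card_split)
      then show ?thesis unfolding N_def by simp
    qed
    show "real (card {i. i<n \<and> \<sigma>0 i = a \<and> \<sigma> i \<noteq> \<delta> a}) \<le> (real (R a) - real (M a)) + (if a \<in> S then 0 else real (M a))"
    proof (cases "a \<in> S")
      case True
      then have "N a (\<delta> a) = M a" unfolding M_def using \<delta>(2) by simp
      then show ?thesis using cs True by (simp add: of_nat_add[symmetric])
    next
      case False
      then show ?thesis using cs by (simp add: of_nat_add[symmetric])
    qed
  qed
  also have "\<dots> = E' + X" unfolding E'_def X_def by (simp add: sum.distrib)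
  finally have mEX: "real m \<le> E' + X" .
  have hK: "\<forall>a<K. h a < K" using h by blast
  have col: "t * (\<Sum>a\<in>{a. a<K \<and> h a = b}. if a \<in> S then 0 else real (M a))
      \<le> (1 - t) * (\<Sum>a\<in>{a. a<K \<and> h a = b}. real (R a) - real (M a))" if b: "b < K" for b
  proof -
    let ?A = "{a. a<K \<and> h a = b}"
    have fA: "finite ?A" by simp
    have Eb0: "0 \<le> (\<Sum>a\<in>?A. real (R a) - real (M a))"
      by (rule sum_nonneg) (use MR in auto)
    show ?thesis
    proof (cases "\<forall>a\<in>?A. a \<in> S")
      case True
      then have "(\<Sum>a\<in>?A. if a \<in> S then 0 else real (M a)) = 0" by (intro sum.neutral) auto
      then show ?thesis using Eb0 t1 by simp
    next
      case False
      then obtain a1 where a1: "a1 < K" "h a1 = b" "a1 \<notin> S" by auto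
      then obtain a0 where a0: "a0 < a1" "h a0 = b" unfolding S_def by auto
      have sub: "{a0, a1} \<subseteq> ?A" using a0 a1 by auto
      have c2: "card {a0, a1} = 2" using a0 by simp
      have cA: "2 \<le> card ?A" using card_mono[OF fA sub] c2 by simp
      have "(\<Sum>a\<in>?A. M a) = (\<Sum>a\<in>?A. N a b)" unfolding M_def by (rule sum.cong) auto
      also have "\<dots> \<le> (\<Sum>a<K. N a b)" by (rule sum_mono2) auto
      also have "\<dots> = comm_size n \<sigma> b" unfolding N_def comm_size_def by (rule grp_card[OF as0])
      finally have "real (\<Sum>a\<in>?A. M a) \<le> real (comm_size n \<sigma> b)" by (simp only: of_nat_le_iff)
      then have "(\<Sum>a\<in>?A. real (M a)) \<le> real (comm_size n \<sigma> b)" by (simp add: of_nat_sum)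
      also have "\<dots> \<le> \<beta> * real n / real K" using sz b by blast
      finally have SM: "(\<Sum>a\<in>?A. real (M a)) \<le> \<beta> * real n / real K" .
      have XM: "(\<Sum>a\<in>?A. if a \<in> S then 0 else real (M a)) \<le> (\<Sum>a\<in>?A. real (M a))"
        by (rule sum_mono) auto
      have "real (card ?A) * q \<le> (\<Sum>a\<in>?A. real (R a))"
        by (rule sum_bounded_below) (use Rq in auto)
      moreover have "2 * q \<le> real (card ?A) * q" using cA q0 by (intro mult_right_mono) auto
      ultimately have SR: "2 * q \<le> (\<Sum>a\<in>?A. real (R a))" by linarith
      have Eb: "2 * q - \<beta> * real n / real K \<le> (\<Sum>a\<in>?A. real (R a) - real (M a))"
        using SR SM by (simp add: sum_subtractf)
      have "t * (\<Sum>a\<in>?A. if a \<in> S then 0 else real (M a)) \<le> t * (\<beta> * real n / real K)"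
        using XM SM t0 by (intro mult_left_mono) auto
      also have "\<dots> = (t * \<beta>) * (real n / real K)" by simp
      also have "\<dots> \<le> ((1 - t) * (2 / \<beta> - \<beta>)) * (real n / real K)"
        using tk by (intro mult_right_mono) auto
      also have "\<dots> = (1 - t) * (2 * q - \<beta> * real n / real K)"
        unfolding q_def using bp Kp by (simp add: field_simps)
      also have "\<dots> \<le> (1 - t) * (\<Sum>a\<in>?A. real (R a) - real (M a))"
        using Eb t1 by (intro mult_left_mono) auto
      finally show ?thesis .
    qed
  qed
  have eqX: "X = (\<Sum>b<K. \<Sum>a\<in>{a. a<K \<and> h a = b}. if a \<in> S then 0 else real (M a))"
    unfolding X_def by (rule grp_sum[OF hK])
  have eqE: "E' = (\<Sum>b<K. \<Sum>a\<in>{a. a<K \<and> h a = b}. real (R a) - real (M a))"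
    unfolding E'_def by (rule grp_sum[OF hK])
  have "t * X = (\<Sum>b<K. t * (\<Sum>a\<in>{a. a<K \<and> h a = b}. if a \<in> S then 0 else real (M a)))"
    unfolding eqX by (simp only: sum_distrib_left)
  also have "\<dots> \<le> (\<Sum>b<K. (1 - t) * (\<Sum>a\<in>{a. a<K \<and> h a = b}. real (R a) - real (M a)))"
    by (rule sum_mono) (use col in auto)
  also have "\<dots> = (1 - t) * E'"
    unfolding eqE by (simp only: sum_distrib_left)
  finally have tX: "t * X \<le> (1 - t) * E'" .
  have "t * real m \<le> t * (E' + X)" using mEX t0 by (intro mult_left_mono) auto
  then have tm: "t * real m \<le> E'" using tX by (simp add: algebra_simps)
  have "q * (t * real m) \<le> q * E'" using tm q0 by (intro mult_left_mono) auto
  then have "q * (t * real m) \<le> 2 * real (alpha_cnt n \<sigma> \<sigma>0)" using qE by linarith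
  moreover have "c_beta \<beta> * real n * real m / real K = q * (t * real m) / 2"
    unfolding ct q_def using bp Kp by (simp add: field_simps)
  ultimately show ?thesis by linarith
qed

theorem lemma6:
  fixes n K m :: nat and \<beta> :: real and \<sigma> \<sigma>0 :: "nat \<Rightarrow> nat"
  assumes "1 \<le> \<beta>" and "\<beta> < sqrt (5/3)"
    and "K \<ge> 1"
    and "is_assignment n K \<sigma>" and "is_assignment n K \<sigma>0"
    and "\<forall>k<K. real n / (\<beta> * real K) \<le> real (comm_size n \<sigma> k)
                 \<and> real (comm_size n \<sigma> k) \<le> \<beta> * real n / real K"
    and "\<forall>k<K. real n / (\<beta> * real K) \<le> real (comm_size n \<sigma>0 k)
                 \<and> real (comm_size n \<sigma>0 k) \<le> \<beta> * real n / real K"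
    and "perm_dist n K \<sigma> \<sigma>0 = m" and "0 < m" and "m < n"
  shows "real (min (alpha_cnt n \<sigma> \<sigma>0) (gamma_cnt n \<sigma> \<sigma>0)) \<ge>
           (if real m \<le> real n / (2 * real K)
            then real n * real m / (real K * \<beta>) - (real m)\<^sup>2
            else c_beta \<beta> * real n * real m / real K)"
proof -
  note b1 = assms(1) and b2 = assms(2)
  have Kp: "0 < K" using assms(3) by simp
  have bp: "0 < \<beta>" using b1 by simp
  have as: "\<forall>i<n. \<sigma> i < K" using assms(4) unfolding is_assignment_def .
  have as0: "\<forall>i<n. \<sigma>0 i < K" using assms(5) unfolding is_assignment_def .
  have szl: "\<forall>k<K. real n / (\<beta> * real K) \<le> real (comm_size n \<sigma> k)" using assms(6) by blast
  have szu: "\<forall>k<K. real (comm_size n \<sigma> k) \<le> \<beta> * real n / real K" using assms(6) by blast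
  have sz0l: "\<forall>k<K. real n / (\<beta> * real K) \<le> real (comm_size n \<sigma>0 k)" using assms(7) by blast
  have sz0u: "\<forall>k<K. real (comm_size n \<sigma>0 k) \<le> \<beta> * real n / real K" using assms(7) by blast
  define P where "P = {hamming n \<sigma> (\<delta> \<circ> \<sigma>0) | \<delta>. \<delta> permutes {0..<K}}"
  have Pimg: "P = (\<lambda>\<delta>. hamming n \<sigma> (\<delta> \<circ> \<sigma>0)) ` {\<delta>. \<delta> permutes {0..<K}}" unfolding P_def by auto
  have fP: "finite P" unfolding Pimg by (intro finite_imageI finite_permutations) simp
  have neP: "P \<noteq> {}" unfolding Pimg using permutes_id by blast
  have mP: "m = Min P" using assms(8) unfolding perm_dist_def P_def by simp
  have "m \<in> P" unfolding mP using fP neP by (rule Min_in)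
  then obtain \<delta> where \<delta>: "\<delta> permutes {0..<K}" "hamming n \<sigma> (\<delta> \<circ> \<sigma>0) = m" unfolding P_def by blast
  have H2: "\<forall>\<delta>. \<delta> permutes {0..<K} \<longrightarrow> m \<le> hamming n \<sigma> (\<delta> \<circ> \<sigma>0)"
  proof (intro allI impI)
    fix d assume "d permutes {0..<K}"
    then have "hamming n \<sigma> (d \<circ> \<sigma>0) \<in> P" unfolding P_def by blast
    then show "m \<le> hamming n \<sigma> (d \<circ> \<sigma>0)" unfolding mP using fP by (intro Min_le)
  qed
  have hm': "hamming n \<sigma>0 (inv \<delta> \<circ> \<sigma>) = m" using hamming_inv[OF \<delta>(1)] \<delta>(2) by simp
  have H2': "\<forall>\<delta>. \<delta> permutes {0..<K} \<longrightarrow> m \<le> hamming n \<sigma>0 (\<delta> \<circ> \<sigma>)"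
  proof (intro allI impI)
    fix d assume d: "d permutes {0..<K}"
    have "hamming n \<sigma>0 (d \<circ> \<sigma>) = hamming n \<sigma> (inv d \<circ> \<sigma>0)" by (rule hamming_inv[OF d])
    moreover have "m \<le> hamming n \<sigma> (inv d \<circ> \<sigma>0)" using H2 permutes_inv[OF d] by blast
    ultimately show "m \<le> hamming n \<sigma>0 (d \<circ> \<sigma>)" by simp
  qed
  have ga: "gamma_cnt n \<sigma> \<sigma>0 = alpha_cnt n \<sigma>0 \<sigma>"
    unfolding gamma_cnt_def alpha_cnt_def by (rule arg_cong[where f=card]) auto
  have A1: "real n * real m / (real K * \<beta>) - (real m)\<^sup>2 \<le> real (alpha_cnt n \<sigma> \<sigma>0)"
    by (rule bound1[OF bp as0 sz0l \<delta>(2)])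
  have G1: "real n * real m / (real K * \<beta>) - (real m)\<^sup>2 \<le> real (gamma_cnt n \<sigma> \<sigma>0)"
    unfolding ga by (rule bound1[OF bp as szl hm'])
  have A2: "c_beta \<beta> * real n * real m / real K \<le> real (alpha_cnt n \<sigma> \<sigma>0)"
    by (rule bound2[OF Kp b1 b2 as as0 szu sz0l H2])
  have G2: "c_beta \<beta> * real n * real m / real K \<le> real (gamma_cnt n \<sigma> \<sigma>0)"
    unfolding ga by (rule bound2[OF Kp b1 b2 as0 as sz0u szl H2'])
  show ?thesis using A1 G1 A2 G2 by (simp add: min_def)
qed

end
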